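(* There exists a compact metric space $X$ which admits a minimal map (indeed a minimal homeomorphism), admits no minimal noninvertible continuous map, is not homeomorphic to the circle $\mathbb{S}^1$, and is not a Slovak space.
   Context: A continuous map $T:X\to X$ on a compact metric space $X$ is minimal if for every $x\in X$ the forward orbit $\{T^n(x):n\in\mathbb{N}\}$ is dense in $X$. $H(X)$ denotes the group of all homeomorphisms of $X$. A nondegenerate compact metric space $X$ is a Slovak space if $H(X)=\{T^n:n\in\mathbb{Z}\}$ for some minimal homeomorphism $T$. *)

theory Defs
  imports "HOL-Analysis.Analysis"
begin

text \<open>Compact metric spaces are represented as compact subsets of the type
  nat \<Rightarrow> real (countable product of the reals, a metric space via Function_Metric);
  every compact metric space embeds homeomorphically into it (Hilbert cube).\<close>

definition minimal_map :: "'a::topological_space set \<Rightarrow> ('a \<Rightarrow> 'a) \<Rightarrow> bool" where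
  "minimal_map X T \<longleftrightarrow> T ` X \<subseteq> X \<and> continuous_on X T \<and>
     (\<forall>x\<in>X. X \<subseteq> closure {(T ^^ n) x | n::nat. True})"

definition int_iter :: "('a \<Rightarrow> 'a) \<Rightarrow> ('a \<Rightarrow> 'a) \<Rightarrow> int \<Rightarrow> 'a \<Rightarrow> 'a" where
  "int_iter T S n = (if n \<ge> 0 then T ^^ nat n else S ^^ nat (- n))"

definition slovak_space :: "'a::topological_space set \<Rightarrow> bool" where
  "slovak_space X \<longleftrightarrow> (\<exists>a\<in>X. \<exists>b\<in>X. a \<noteq> b) \<and>
     (\<exists>T S. homeomorphism X X T S \<and> minimal_map X T \<and>
        (\<forall>h. (\<exists>g. homeomorphism X X h g) \<longleftrightarrow>
             (\<exists>n::int. \<forall>x\<in>X. h x = int_iter T S n x)))"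

end

theory Submission
  imports Defs
begin



lemma minimal_surj:
  fixes X :: "'a::metric_space set"
  assumes "minimal_map X f" "compact X"
  shows "f ` X = X"
proof
  show "f ` X \<subseteq> X" using assms(1) unfolding minimal_map_def by blast
  show "X \<subseteq> f ` X"
  proof
    fix y assume y: "y \<in> X"
    have fy: "f y \<in> X" using assms(1) y unfolding minimal_map_def by blast
    have cl: "closed (f ` X)"
      using assms unfolding minimal_map_def
      by (auto intro!: compact_imp_closed compact_continuous_image)
    have iter: "(f ^^ n) x \<in> X" if "x \<in> X" for n x
      using that assms(1) unfolding minimal_map_def by (induction n) auto
    have "{(f ^^ n) (f y) | n::nat. True} \<subseteq> f ` X"
    proof clarify
      fix n
      have "(f ^^ n) (f y) = f ((f ^^ n) y)" by (metis comp_apply funpow_Suc_right funpow_swap1)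
      then show "(f ^^ n) (f y) \<in> f ` X" using iter[OF y] by auto
    qed
    then have "closure {(f ^^ n) (f y) | n::nat. True} \<subseteq> f ` X"
      using cl closure_minimal by blast
    moreover have "X \<subseteq> closure {(f ^^ n) (f y) | n::nat. True}"
      using assms(1) fy unfolding minimal_map_def by blast
    ultimately show "y \<in> f ` X" using y by blast
  qed
qed

lemma iter_in:
  assumes "f ` X \<subseteq> X" "x \<in> X" shows "(f ^^ n) x \<in> X"
  using assms by (induction n) auto

lemma iter_cont:
  assumes "f ` X \<subseteq> X" "continuous_on X f" shows "continuous_on X (f ^^ n)"
proof (induction n)
  case 0 then show ?case by (simp add: continuous_on_id')
next
  case (Suc n)
  have "continuous_on X (f \<circ> (f ^^ n))"
    apply (rule continuous_on_compose[OF Suc])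
    using assms continuous_on_subset iter_in by (metis image_subsetI)
  then show ?case by simp
qed

lemma minimal_lemmaL:
  fixes X :: "'a::metric_space set"
  assumes min: "minimal_map X f" and cX: "compact X" and U: "open U" "U \<inter> X \<noteq> {}"
  shows "\<exists>y\<in>X. \<forall>x\<in>X. f x = y \<longrightarrow> x \<in> U"
proof (rule ccontr)
  assume "\<not> ?thesis"
  then have "\<forall>y\<in>X. \<exists>x. x \<in> X \<and> x \<notin> U \<and> f x = y" by blast
  then obtain g where g: "\<And>y. y \<in> X \<Longrightarrow> g y \<in> X \<and> g y \<notin> U \<and> f (g y) = y" by metis
  from U obtain y0 where y0: "y0 \<in> X" by blast
  define z where "z n = (g ^^ n) y0" for n
  have zX: "z n \<in> X" for n unfolding z_def by (induction n) (auto simp: y0 g)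
  have zU: "z (Suc n) \<notin> U" for n using g zX unfolding z_def by auto
  have fz: "f (z (Suc n)) = z n" for n using g zX unfolding z_def by auto
  have fzj: "(f ^^ j) (z (n + j)) = z n" for j n
  proof (induction j arbitrary: n)
    case 0 then show ?case by simp
  next
    case (Suc j)
    have "(f ^^ Suc j) (z (n + Suc j)) = (f ^^ j) (f (z (Suc (n + j))))"
      by (simp add: funpow_Suc_right del: funpow.simps)
    also have "\<dots> = (f ^^ j) (z (n + j))" by (simp add: fz)
    finally show ?case using Suc by simp
  qed
  have fX: "f ` X \<subseteq> X" and cf: "continuous_on X f" using min unfolding minimal_map_def by auto
  obtain w r where w: "w \<in> X" and r: "strict_mono r" and lim: "(z \<circ> r) \<longlonglongrightarrow> w"
    using compact_imp_seq_compact[OF cX] zX unfolding seq_compact_def by metis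
  have closedXU: "closed (X - U)" using cX U(1) by (simp add: closed_Diff compact_imp_closed)
  have orb: "(f ^^ j) w \<in> X - U" for j
  proof -
    have cj: "continuous_on X (f ^^ j)" by (rule iter_cont[OF fX cf])
    have "((\<lambda>k. (f ^^ j) (z (r k))) \<longlonglongrightarrow> (f ^^ j) w)"
      using continuous_on_tendsto_compose[OF cj lim[unfolded comp_def] w] zX by auto
    moreover have ev: "\<forall>\<^sub>F k in sequentially. (f ^^ j) (z (r k)) \<in> X - U"
    proof -
      have "\<forall>\<^sub>F k in sequentially. r k \<ge> Suc j"
        using filterlim_subseq[OF r] by (simp add: filterlim_at_top)
      then show ?thesis
      proof (rule eventually_mono)
        fix k assume "Suc j \<le> r k"
        then obtain m where m: "r k = Suc m + j" by (metis add.commute le_Suc_ex add_Suc_right)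
        have "(f ^^ j) (z (r k)) = z (Suc m)" using fzj[of j "Suc m"] m by simp
        then show "(f ^^ j) (z (r k)) \<in> X - U" using zX zU by simp
      qed
    qed
    ultimately show ?thesis using Lim_in_closed_set[OF closedXU ev] by auto
  qed
  then have "{(f ^^ n) w | n::nat. True} \<subseteq> X - U" by auto
  then have "closure {(f ^^ n) w | n::nat. True} \<subseteq> X - U" using closedXU closure_minimal by blast
  moreover have "X \<subseteq> closure {(f ^^ n) w | n::nat. True}" using min w unfolding minimal_map_def by blast
  ultimately show False using U(2) by blast
qed

lemma minimal_no_fold:
  fixes X :: "'a::metric_space set"
  assumes min: "minimal_map X f" and cX: "compact X" and V: "open V" "V \<inter> X \<noteq> {}"
    and sub: "f ` (V \<inter> X) \<subseteq> f ` U2" and U2: "U2 \<subseteq> X" "V \<inter> U2 = {}"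
  shows False
proof -
  obtain y where y: "y \<in> X" "\<forall>x\<in>X. f x = y \<longrightarrow> x \<in> V" using minimal_lemmaL[OF min cX V] by blast
  obtain x where x: "x \<in> X" "f x = y" using minimal_surj[OF min cX] y(1) by (metis imageE)
  then have "x \<in> V" using y by blast
  then have "f x \<in> f ` U2" using sub x by blast
  then obtain x' where "x' \<in> U2" "f x' = y" using x by auto
  then show False using y U2 by blast
qed




lemma periodic_finite:
  fixes X :: "'a::metric_space set"
  assumes min: "minimal_map X T" and x: "x \<in> X" and k: "k > 0" and per: "(T ^^ k) x = x"
  shows "finite X"
proof -
  have pq: "((T ^^ k) ^^ q) x = x" for q
  proof (induction q)
    case 0 show ?case by (simp only: funpow_0)
  next
    case (Suc q)
    have "((T ^^ k) ^^ Suc q) x = (T ^^ k) (((T ^^ k) ^^ q) x)" by (simp only: funpow.simps comp_apply)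
    then show ?case using Suc per by simp
  qed
  have eq: "(T ^^ n) x = (T ^^ (n mod k)) x" for n
  proof -
    have "(T ^^ n) x = (T ^^ (n mod k + k * (n div k))) x" by simp
    also have "\<dots> = (T ^^ (n mod k)) ((T ^^ (k * (n div k))) x)" by (simp only: funpow_add comp_apply)
    also have "(T ^^ (k * (n div k))) = (T ^^ k) ^^ (n div k)" by (simp add: funpow_mult)
    finally show ?thesis by (simp only: pq)
  qed
  have "{(T ^^ n) x | n::nat. True} \<subseteq> (\<lambda>j. (T ^^ j) x) ` {..<k}"
  proof clarify
    fix n show "(T ^^ n) x \<in> (\<lambda>j. (T ^^ j) x) ` {..<k}"
    proof (rule image_eqI[where x="n mod k"])
      show "(T ^^ n) x = (T ^^ (n mod k)) x" by (rule eq)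
      show "n mod k \<in> {..<k}" using k by simp
    qed
  qed
  then have fin: "finite {(T ^^ n) x | n::nat. True}" by (rule finite_subset) auto
  then have "closure {(T ^^ n) x | n::nat. True} = {(T ^^ n) x | n::nat. True}"
    by (simp add: finite_imp_closed)
  moreover have "X \<subseteq> closure {(T ^^ n) x | n::nat. True}" using min x unfolding minimal_map_def by blast
  ultimately have "X \<subseteq> {(T ^^ n) x | n::nat. True}" by simp
  then show ?thesis using fin by (rule finite_subset)
qed

lemma TS_iter:
  assumes hom: "homeomorphism X X T S" and x: "x \<in> X"
  shows "(T ^^ k) ((S ^^ k) x) = x"
proof -
  have SX: "(S ^^ j) y \<in> X" if "y \<in> X" for j y using that hom
    by (induction j) (auto simp: homeomorphism_def)
  show ?thesis using x
  proof (induction k arbitrary: x)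
    case 0 then show ?case by simp
  next
    case (Suc k)
    have "(T ^^ Suc k) ((S ^^ Suc k) x) = (T ^^ k) (T ((S ^^ Suc k) x))"
      by (simp only: funpow_Suc_right comp_apply)
    also have "(S ^^ Suc k) x = S ((S ^^ k) x)" by simp
    also have "T (S ((S ^^ k) x)) = (S ^^ k) x" using hom SX[OF Suc.prems] by (simp add: homeomorphism_def)
    finally show ?case using Suc by simp
  qed
qed



lemma not_slovak:
  fixes X :: "'a::metric_space set"
  assumes inf: "infinite X" and hh: "homeomorphism X X h h" and nt: "x0 \<in> X" "h x0 \<noteq> x0"
  shows "\<not> slovak_space X"
proof
  assume "slovak_space X"
  then obtain T S where hom: "homeomorphism X X T S" and min: "minimal_map X T"
    and H: "\<forall>h. (\<exists>g. homeomorphism X X h g) \<longleftrightarrow> (\<exists>n::int. \<forall>x\<in>X. h x = int_iter T S n x)"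
    unfolding slovak_space_def by blast
  obtain n :: int where n: "\<forall>x\<in>X. h x = int_iter T S n x" using H hh by blast
  have hhx: "h (h x0) = x0" using hh nt by (simp add: homeomorphism_def)
  have hx0: "h x0 \<in> X" using hh nt by (auto simp: homeomorphism_def)
  have TX: "(T ^^ j) y \<in> X" if "y \<in> X" for j y using that hom
    by (induction j) (auto simp: homeomorphism_def)
  have SX: "(S ^^ j) y \<in> X" if "y \<in> X" for j y using that hom
    by (induction j) (auto simp: homeomorphism_def)
  show False
  proof (cases "n \<ge> 0")
    case True
    define m where "m = nat n"
    have hm: "\<forall>x\<in>X. h x = (T ^^ m) x" using n True by (simp add: int_iter_def m_def)
    have "m \<noteq> 0"
    proof
      assume "m = 0" then show False using hm nt by auto
    qed
    have "(T ^^ (m + m)) x0 = (T ^^ m) ((T ^^ m) x0)" by (simp add: funpow_add)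
    also have "(T ^^ m) x0 = h x0" using hm nt by simp
    also have "(T ^^ m) (h x0) = h (h x0)" using hm hx0 by simp
    also have "h (h x0) = x0" by (rule hhx)
    finally show False using periodic_finite[OF min nt(1), of "m+m"] inf \<open>m \<noteq> 0\<close> by simp
  next
    case False
    define m where "m = nat (- n)"
    have hm: "\<forall>x\<in>X. h x = (S ^^ m) x" using n False by (simp add: int_iter_def m_def)
    have "m \<noteq> 0" using False m_def by auto
    have "(S ^^ (m + m)) x0 = (S ^^ m) ((S ^^ m) x0)" by (simp add: funpow_add)
    also have "(S ^^ m) x0 = h x0" using hm nt by simp
    also have "(S ^^ m) (h x0) = h (h x0)" using hm hx0 by simp
    also have "h (h x0) = x0" by (rule hhx)
    finally have "(T ^^ (m + m)) x0 = x0" using TS_iter[OF hom nt(1), of "m+m"] by simp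
    then show False using periodic_finite[OF min nt(1), of "m+m"] inf \<open>m \<noteq> 0\<close> by simp
  qed
qed



lemma minimal_transfer:
  fixes X :: "'a::metric_space set" and Y :: "'b::metric_space set"
  assumes hom: "homeomorphism X Y \<phi> \<psi>" and cX: "compact X" and min: "minimal_map X T"
  shows "minimal_map Y (\<phi> \<circ> T \<circ> \<psi>)"
proof -
  have TX: "T ` X \<subseteq> X" and cT: "continuous_on X T" and dense: "\<forall>x\<in>X. X \<subseteq> closure {(T ^^ n) x | n. True}"
    using min unfolding minimal_map_def by auto
  have img: "(\<phi> \<circ> T \<circ> \<psi>) ` Y \<subseteq> Y" using hom TX unfolding homeomorphism_def by auto
  have cont: "continuous_on Y (\<phi> \<circ> T \<circ> \<psi>)"
  proof -
    have c\<psi>: "continuous_on Y \<psi>" and c\<phi>: "continuous_on X \<phi>" and \<psi>Y: "\<psi> ` Y = X"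
      using hom unfolding homeomorphism_def by auto
    have cc: "continuous_on Y (T \<circ> \<psi>)" using continuous_on_compose[OF c\<psi>] cT \<psi>Y by simp
    have ss: "(T \<circ> \<psi>) ` Y \<subseteq> X" using TX \<psi>Y by auto
    have "continuous_on Y (\<phi> \<circ> (T \<circ> \<psi>))"
      using continuous_on_compose[OF cc continuous_on_subset[OF c\<phi> ss]] .
    then show ?thesis by (simp add: comp_assoc)
  qed
  have "Y \<subseteq> closure {((\<phi> \<circ> T \<circ> \<psi>) ^^ n) y | n. True}" if y: "y \<in> Y" for y
  proof -
    define x where "x = \<psi> y"
    have x: "x \<in> X" "\<phi> x = y" using hom y unfolding x_def homeomorphism_def by auto
    have it: "((\<phi> \<circ> T \<circ> \<psi>) ^^ n) y = \<phi> ((T ^^ n) x)" for n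
    proof (induction n)
      case 0 then show ?case using x by simp
    next
      case (Suc n)
      have "(T ^^ n) x \<in> X" using iter_in[OF TX x(1)] .
      then show ?case using Suc hom by (simp add: homeomorphism_def)
    qed
    have orb: "{((\<phi> \<circ> T \<circ> \<psi>) ^^ n) y | n. True} = \<phi> ` {(T ^^ n) x | n. True}"
      using it by auto
    have clX: "closure {(T ^^ n) x | n. True} \<subseteq> X"
      using iter_in[OF TX x(1)] compact_imp_closed[OF cX] by (intro closure_minimal) auto
    have "\<phi> ` closure {(T ^^ n) x | n. True} \<subseteq> closure (\<phi> ` {(T ^^ n) x | n. True})"
      apply (rule image_closure_subset)
      apply (rule continuous_on_subset[OF _ clX])
      using hom unfolding homeomorphism_def apply blast
      by (auto intro: closure_subset[THEN subsetD])
    moreover have "Y = \<phi> ` X" using hom by (simp add: homeomorphism_def)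
    moreover have "\<phi> ` X \<subseteq> \<phi> ` closure {(T ^^ n) x | n. True}"
      using dense x(1) by (intro image_mono) blast
    ultimately show ?thesis unfolding orb by blast
  qed
  then show ?thesis using img cont unfolding minimal_map_def by blast
qed




definition E :: "complex \<Rightarrow> real \<Rightarrow> complex" where
  "E c t = c + exp (\<i> * of_real t)"

definition Y :: "complex set" where "Y = sphere 0 1 \<union> sphere 3 1"

lemma exp_i_dist: "cmod (exp (\<i> * of_real t) - exp (\<i> * of_real s)) \<le> \<bar>t - s\<bar>"
proof -
  have "exp (\<i> * of_real t) - exp (\<i> * of_real s) = exp (\<i> * of_real s) * (exp (\<i> * of_real (t - s)) - 1)"
    by (simp add: algebra_simps flip: exp_add)
  then have "cmod (exp (\<i> * of_real t) - exp (\<i> * of_real s)) = cmod (exp (\<i> * of_real (t - s)) - 1)"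
    by (simp add: norm_mult)
  also have "\<dots> = 2 * \<bar>sin ((t - s) / 2)\<bar>" by (rule dist_exp_i_1)
  also have "\<dots> \<le> 2 * \<bar>(t - s) / 2\<bar>" using abs_sin_x_le_abs_x[of "(t - s) / 2"] by linarith
  finally show ?thesis by simp
qed

lemma E_dist: "dist (E c t) (E c s) \<le> \<bar>t - s\<bar>"
  using exp_i_dist by (simp add: E_def dist_norm)

lemma exp_i_inj:
  assumes "exp (\<i> * of_real a) = exp (\<i> * of_real b)" "\<bar>a - b\<bar> < 2 * pi"
  shows "a = b"
proof -
  obtain n :: int where n: "\<i> * of_real a = \<i> * of_real b + (of_int (2 * n) * pi) * \<i>"
    using assms(1) exp_eq by blast
  from arg_cong[OF n, of Im] have "a = b + 2 * n * pi" by simp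
  then have "\<bar>2 * n * pi\<bar> < 2 * pi" using assms(2) by simp
  then have "\<bar>n\<bar> < 1" by (simp add: abs_mult)
  then have "n = 0" by simp
  then show ?thesis using \<open>a = b + 2 * n * pi\<close> by simp
qed

lemma unit_exp: assumes "cmod w = 1" obtains s where "w = exp (\<i> * of_real s)"
proof -
  have "w \<noteq> 0" using assms by auto
  then have "w = of_real (cmod w) * exp (\<i> * of_real (Arg w))" by (rule Arg_eq)
  then show ?thesis using assms that by simp
qed

lemma local_arg:
  assumes "\<epsilon> > 0"
  shows "\<exists>r>0. \<forall>w. cmod w = 1 \<and> cmod (w - 1) < r \<longrightarrow> (\<exists>\<theta>. w = exp (\<i> * of_real \<theta>) \<and> \<bar>\<theta>\<bar> < \<epsilon>)"
proof -
  have "continuous (at 1) Arg"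
    by (rule continuous_at_Arg) (auto simp: complex_nonpos_Reals_iff)
  then obtain r where r: "r > 0" "\<And>w. dist w 1 < r \<Longrightarrow> dist (Arg w) (Arg 1) < \<epsilon>"
    using assms unfolding continuous_at_eps_delta by blast
  have "\<exists>\<theta>. w = exp (\<i> * of_real \<theta>) \<and> \<bar>\<theta>\<bar> < \<epsilon>" if "cmod w = 1" "cmod (w - 1) < r" for w
  proof (intro exI conjI)
    have "w \<noteq> 0" using that by auto
    then have "w = of_real (cmod w) * exp (\<i> * of_real (Arg w))" by (rule Arg_eq)
    then show "w = exp (\<i> * of_real (Arg w))" using that by simp
    show "\<bar>Arg w\<bar> < \<epsilon>" using r(2)[of w] that by (simp add: dist_norm)
  qed
  then show ?thesis using r(1) by blast
qed

lemma Y_cases: "z \<in> Y \<longleftrightarrow> (cmod z = 1 \<or> cmod (z - 3) = 1)"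
  by (auto simp: Y_def dist_norm norm_minus_commute)

lemma far: assumes "cmod z = 1" "cmod (w - 3) = 1" shows "dist z w \<ge> 1"
proof -
  have "(3::real) = cmod ((3 - w) + (w - z) + z)" by simp
  also have "\<dots> \<le> cmod ((3 - w) + (w - z)) + cmod z" by (rule norm_triangle_ineq)
  also have "\<dots> \<le> cmod (3 - w) + cmod (w - z) + cmod z" using norm_triangle_ineq[of "3 - w" "w - z"] by linarith
  finally have "3 \<le> cmod (3 - w) + cmod (w - z) + cmod z" .
  moreover have "cmod (3 - w) = 1" using assms(2) by (simp add: norm_minus_commute)
  ultimately show ?thesis using assms(1) by (simp add: dist_norm norm_minus_commute)
qed




lemma ivt_between:
  fixes F :: "real \<Rightarrow> real"
  assumes "continuous_on {u..v} F" "u \<le> v" "min (F u) (F v) \<le> w" "w \<le> max (F u) (F v)"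
  shows "\<exists>t\<in>{u..v}. F t = w"
proof (cases "F u \<le> F v")
  case True
  then have "F u \<le> w" "w \<le> F v" using assms by auto
  from IVT'[of F u w v, OF this assms(2) assms(1)] show ?thesis by auto
next
  case False
  then have "F v \<le> w" "w \<le> F u" using assms by auto
  from IVT2'[of F v w u, OF this assms(2) assms(1)] show ?thesis by auto
qed

lemma inj_between:
  fixes F :: "real \<Rightarrow> real"
  assumes c: "continuous_on {u..v} F" and inj: "inj_on F {u..v}" and s: "u < s" "s < v"
  shows "min (F u) (F v) < F s \<and> F s < max (F u) (F v)"
proof -
  have cs1: "continuous_on {u..s} F" by (rule continuous_on_subset[OF c]) (use s in auto)
  have cs2: "continuous_on {s..v} F" by (rule continuous_on_subset[OF c]) (use s in auto)
  have ne: "F s \<noteq> F u" "F s \<noteq> F v"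
    using inj s by (auto dest: inj_onD)
  have no: False if "F t = F t'" "t \<in> {u..v}" "t' \<in> {u..v}" "t \<noteq> t'" for t t'
    using inj that by (auto dest: inj_onD)
  show ?thesis
  proof (rule ccontr)
    assume "\<not> ?thesis"
    then consider "F s > max (F u) (F v)" | "F s < min (F u) (F v)" using ne by linarith
    then show False
    proof cases
      case 1
      show False
      proof (cases "F u \<ge> F v")
        case True
        have "F v \<le> F u" "F u \<le> F s" "s \<le> v" using True 1 s by auto
        from IVT2'[of F v "F u" s, OF this cs2]
        obtain t where "s \<le> t" "t \<le> v" "F t = F u" by blast
        then show False using no[of t u] s by auto
      next
        case False
        have "F u \<le> F v" "F v \<le> F s" "u \<le> s" using False 1 s by auto
        from IVT'[of F u "F v" s, OF this cs1]
        obtain t where "u \<le> t" "t \<le> s" "F t = F v" by blast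
        then show False using no[of t v] s by auto
      qed
    next
      case 2
      show False
      proof (cases "F u \<le> F v")
        case True
        have "F s \<le> F u" "F u \<le> F v" "s \<le> v" using True 2 s by auto
        from IVT'[of F s "F u" v, OF this cs2]
        obtain t where "s \<le> t" "t \<le> v" "F t = F u" by blast
        then show False using no[of t u] s by auto
      next
        case False
        have "F s \<le> F v" "F v \<le> F u" "u \<le> s" using False 2 s by auto
        from IVT2'[of F s "F v" u, OF this cs1]
        obtain t where "u \<le> t" "t \<le> s" "F t = F v" by blast
        then show False using no[of t v] s by auto
      qed
    qed
  qed
qed

lemma inj_open_image:
  fixes F :: "real \<Rightarrow> real"
  assumes c: "continuous_on {u..v} F" and inj: "inj_on F {u..v}" and s: "u < s" "s < v"
  shows "\<exists>\<eta>>0. \<forall>w. \<bar>w - F s\<bar> < \<eta> \<longrightarrow> (\<exists>t\<in>{u..v}. F t = w)"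
proof -
  have b: "min (F u) (F v) < F s" "F s < max (F u) (F v)" using inj_between[OF assms] by auto
  define \<eta> where "\<eta> = min (F s - min (F u) (F v)) (max (F u) (F v) - F s)"
  have "\<eta> > 0" using b by (simp add: \<eta>_def)
  moreover have "\<exists>t\<in>{u..v}. F t = w" if "\<bar>w - F s\<bar> < \<eta>" for w
    using ivt_between[OF c, of w] that s unfolding \<eta>_def by (auto simp: abs_less_iff)
  ultimately show ?thesis by blast
qed

lemma fold_real_up:
  fixes F :: "real \<Rightarrow> real"
  assumes c: "continuous_on {x..y} F" and xy: "x < y" "F x = F y" and m: "m \<in> {x..y}" "F m > F x"
  shows "\<exists>t0 \<epsilon> V2. \<epsilon> > 0 \<and> {t0-\<epsilon>..t0+\<epsilon>} \<subseteq> {x<..<y} \<and> V2 \<subseteq> {x<..<y} \<and>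
     (\<forall>t. \<bar>t - t0\<bar> < \<epsilon> \<longrightarrow> t \<notin> V2) \<and> (\<forall>t. \<bar>t - t0\<bar> < \<epsilon> \<longrightarrow> (\<exists>t'\<in>V2. F t' = F t))"
proof -
  obtain cc where cc: "cc \<in> {x..y}" "\<And>t. t \<in> {x..y} \<Longrightarrow> F t \<le> F cc"
    using continuous_attains_sup[OF compact_Icc _ c] xy by auto
  have Fc: "F cc > F x" using cc(2)[OF m(1)] m by simp
  have "cc \<noteq> x" "cc \<noteq> y" using Fc xy by auto
  then have ccx: "x < cc" "cc < y" using cc(1) by auto
  define w where "w = (F x + F cc) / 2"
  have cxc: "continuous_on {x..cc} F" by (rule continuous_on_subset[OF c]) (use ccx in auto)
  have "F x \<le> w" "w \<le> F cc" "x \<le> cc" using Fc ccx by (auto simp: w_def)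
  from IVT'[of F x w cc, OF this cxc]
  obtain t1 where t1: "x \<le> t1" "t1 \<le> cc" "F t1 = w" by blast
  have t1s: "x < t1" "t1 < cc" using t1 Fc unfolding w_def by (auto simp: order_le_less)
  have t1I: "t1 \<in> {x..y}" using t1s ccx by auto
  have hp: "(F cc - F x) / 2 > 0" using Fc by simp
  from c[unfolded continuous_on_iff, rule_format, OF t1I hp]
  obtain d where d: "d > 0" "\<And>t. t \<in> {x..y} \<Longrightarrow> dist t t1 < d \<Longrightarrow> dist (F t) (F t1) < (F cc - F x) / 2"
    by blast
  define \<epsilon> where "\<epsilon> = min d (min (t1 - x) (cc - t1)) / 2"
  have \<epsilon>: "\<epsilon> > 0" using d t1s by (simp add: \<epsilon>_def)
  have e1: "\<epsilon> \<le> (t1 - x) / 2" "\<epsilon> \<le> (cc - t1) / 2" "\<epsilon> \<le> d / 2"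
    unfolding \<epsilon>_def by (simp_all add: min_def)
  have sub: "{t1-\<epsilon>..t1+\<epsilon>} \<subseteq> {x<..<cc}" using t1s d e1 \<epsilon> by auto
  have val: "F x < F t \<and> F t < F cc" if "\<bar>t - t1\<bar> < \<epsilon>" for t
  proof -
    have "t \<in> {x..y}" "dist t t1 < d" using that e1 t1s ccx \<epsilon> by (auto simp: dist_real_def abs_less_iff)
    then have "\<bar>F t - w\<bar> < (F cc - F x) / 2" using d(2) t1 by (simp add: dist_real_def)
    then have "F t - w < (F cc - F x) / 2 \<and> -(F t - w) < (F cc - F x) / 2" by (simp only: abs_less_iff)
    then show ?thesis unfolding w_def by (auto simp: field_simps)
  qed
  have hit: "\<exists>t'\<in>{cc<..<y}. F t' = F t" if "\<bar>t - t1\<bar> < \<epsilon>" for t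
  proof -
    have cy: "continuous_on {cc..y} F" by (rule continuous_on_subset[OF c]) (use ccx in auto)
    have "F y \<le> F t" "F t \<le> F cc" "cc \<le> y" using val[OF that] xy ccx by auto
    from IVT2'[of F y "F t" cc, OF this cy]
    obtain t' where t': "cc \<le> t'" "t' \<le> y" "F t' = F t" by blast
    then have "t' \<noteq> cc" "t' \<noteq> y" using val[OF that] xy by auto
    then show ?thesis using t' by auto
  qed
  have 1: "\<epsilon> > 0" by (rule \<epsilon>)
  have 2: "{t1-\<epsilon>..t1+\<epsilon>} \<subseteq> {x<..<y}" using sub ccx by auto
  have 3: "{cc<..<y} \<subseteq> {x<..<y}" using ccx by auto
  have 4: "\<forall>t. \<bar>t - t1\<bar> < \<epsilon> \<longrightarrow> t \<notin> {cc<..<y}"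
  proof (intro allI impI)
    fix t assume "\<bar>t - t1\<bar> < \<epsilon>"
    then have "t \<in> {t1-\<epsilon>..t1+\<epsilon>}" by (simp add: abs_less_iff)
    then show "t \<notin> {cc<..<y}" using sub by auto
  qed
  have 5: "\<forall>t. \<bar>t - t1\<bar> < \<epsilon> \<longrightarrow> (\<exists>t'\<in>{cc<..<y}. F t' = F t)" using hit by blast
  show ?thesis using 1 2 3 4 5 by blast
qed

lemma fold_real:
  fixes F :: "real \<Rightarrow> real"
  assumes c: "continuous_on {x..y} F" and xy: "x < y" "F x = F y"
  shows "\<exists>t0 \<epsilon> V2. \<epsilon> > 0 \<and> {t0-\<epsilon>..t0+\<epsilon>} \<subseteq> {x<..<y} \<and> V2 \<subseteq> {x<..<y} \<and>
     (\<forall>t. \<bar>t - t0\<bar> < \<epsilon> \<longrightarrow> t \<notin> V2) \<and> (\<forall>t. \<bar>t - t0\<bar> < \<epsilon> \<longrightarrow> (\<exists>t'\<in>V2. F t' = F t))"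
proof (cases "\<exists>m\<in>{x..y}. F m \<noteq> F x")
  case True
  then obtain m where m: "m \<in> {x..y}" "F m \<noteq> F x" by blast
  show ?thesis
  proof (cases "F m > F x")
    case True
    then show ?thesis by (rule fold_real_up[OF c xy m(1)])
  next
    case False
    then have "(- F m) > (- F x)" using m by simp
    have c': "continuous_on {x..y} (\<lambda>t. - F t)" using c by (intro continuous_intros)
    have "- F x = - F y" using xy by simp
    from fold_real_up[OF c' xy(1) this m(1) \<open>(- F m) > (- F x)\<close>]
    obtain t0 \<epsilon> V2 where h: "\<epsilon> > 0" "{t0-\<epsilon>..t0+\<epsilon>} \<subseteq> {x<..<y}" "V2 \<subseteq> {x<..<y}"
      "\<forall>t. \<bar>t - t0\<bar> < \<epsilon> \<longrightarrow> t \<notin> V2" "\<forall>t. \<bar>t - t0\<bar> < \<epsilon> \<longrightarrow> (\<exists>t'\<in>V2. - F t' = - F t)"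
      by blast
    have "\<forall>t. \<bar>t - t0\<bar> < \<epsilon> \<longrightarrow> (\<exists>t'\<in>V2. F t' = F t)" using h(5) by simp
    then show ?thesis using h(1-4) by blast
  qed
next
  case False
  then have const: "\<And>t. t \<in> {x..y} \<Longrightarrow> F t = F x" by blast
  define t0 where "t0 = x + (y - x) / 4"
  define \<epsilon> where "\<epsilon> = (y - x) / 8"
  have 1: "\<epsilon> > 0" using xy by (simp add: \<epsilon>_def)
  have 2: "{t0-\<epsilon>..t0+\<epsilon>} \<subseteq> {x<..<y}" using xy by (auto simp: t0_def \<epsilon>_def field_simps)
  have 3: "{(x + y) / 2} \<subseteq> {x<..<y}" using xy by auto
  have 4: "\<forall>t. \<bar>t - t0\<bar> < \<epsilon> \<longrightarrow> t \<notin> {(x + y) / 2}"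
  proof (intro allI impI)
    fix t assume "\<bar>t - t0\<bar> < \<epsilon>"
    then have "t < t0 + \<epsilon>" by (simp add: abs_less_iff)
    moreover have "t0 + \<epsilon> < (x + y) / 2" using xy unfolding t0_def \<epsilon>_def by (simp add: field_simps)
    ultimately show "t \<notin> {(x + y) / 2}" by auto
  qed
  have 5: "\<forall>t. \<bar>t - t0\<bar> < \<epsilon> \<longrightarrow> (\<exists>t'\<in>{(x + y) / 2}. F t' = F t)"
  proof (intro allI impI)
    fix t assume a: "\<bar>t - t0\<bar> < \<epsilon>"
    then have "t0 - \<epsilon> < t" "t < t0 + \<epsilon>" by (simp_all add: abs_less_iff)
    moreover have "x < t0 - \<epsilon>" "t0 + \<epsilon> < y" using xy unfolding t0_def \<epsilon>_def by (simp_all add: field_simps)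
    ultimately have "t \<in> {x..y}" by simp
    have "(x + y) / 2 \<in> {x..y}" using xy by simp
    then have "F ((x + y) / 2) = F x" by (rule const)
    moreover have "F t = F x" using \<open>t \<in> {x..y}\<close> by (rule const)
    ultimately have "F ((x + y) / 2) = F t" by (rule trans[OF _ sym])
    then show "\<exists>t'\<in>{(x + y) / 2}. F t' = F t" by simp
  qed
  show ?thesis using 1 2 3 4 5 by blast
qed




lemma E_center: "cmod (E c t - c) = 1"
  by (simp add: E_def)

lemma E_in: "c \<in> {0,3} \<Longrightarrow> E c t \<in> Y"
  by (auto simp: Y_cases E_def)

lemma cen_exists: "z \<in> Y \<Longrightarrow> \<exists>c\<in>{0,3}. cmod (z - c) = 1"
  by (auto simp: Y_cases)

lemma same_center:
  assumes "c \<in> {0,3}" "c' \<in> {0,3}" "cmod (z - c) = 1" "cmod (w - c') = 1" "dist z w < 1"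
  shows "c = c'"
proof (rule ccontr)
  assume ne: "c \<noteq> c'"
  show False
  proof (cases "c = 0")
    case True
    then have "c' = 3" using ne assms by auto
    then show ?thesis using far[of z w] assms True by auto
  next
    case False
    then have "c = 3" "c' = 0" using ne assms by auto
    then show ?thesis using far[of w z] assms by (auto simp: dist_commute)
  qed
qed

lemma conn_center:
  assumes S: "connected S" "S \<subseteq> Y" and z: "z \<in> S" and c: "c \<in> {0,3}" "cmod (z - c) = 1"
    and w: "w \<in> S"
  shows "cmod (w - c) = 1"
proof (rule ccontr)
  assume nw: "cmod (w - c) \<noteq> 1"
  define c2 where "c2 = (if c = 0 then 3 else (0::complex))"
  have c2: "c2 \<in> {0,3}" "c2 \<noteq> c" using c by (auto simp: c2_def)
  have cover: "S \<subseteq> sphere c 1 \<union> sphere c2 1"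
  proof
    fix v assume "v \<in> S"
    then obtain cv where "cv \<in> {0,3}" "cmod (v - cv) = 1" using cen_exists S(2) by blast
    then show "v \<in> sphere c 1 \<union> sphere c2 1" using c c2 by (auto simp: dist_norm norm_minus_commute c2_def)
  qed
  have disj: "sphere c 1 \<inter> sphere c2 1 = {}"
  proof (rule ccontr)
    assume "sphere c 1 \<inter> sphere c2 1 \<noteq> {}"
    then obtain v where "cmod (v - c) = 1" "cmod (v - c2) = 1" by (auto simp: dist_norm norm_minus_commute)
    then have "c = c2" using same_center[of c c2 v v] c c2 by simp
    then show False using c2 by simp
  qed
  have "w \<in> sphere c2 1" using cover w nw by (auto simp: dist_norm norm_minus_commute)
  moreover have "z \<in> sphere c 1" using c by (simp add: dist_norm norm_minus_commute)
  ultimately show False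
    using S(1) cover disj z w unfolding connected_closed
    by (metis (no_types, lifting) closed_sphere disjoint_iff_not_equal emptyE IntI Int_emptyI Int_iff)
qed

lemma polar: assumes "cmod (z - c) = 1" obtains s where "z = E c s"
proof -
  obtain s where "z - c = exp (\<i> * of_real s)" using unit_exp assms by blast
  then have "z = E c s" by (simp add: E_def algebra_simps)
  then show ?thesis using that by blast
qed




lemma continuous_on_E: "continuous_on S (E c)"
  unfolding E_def by (intro continuous_intros)

lemma lift_exists:
  assumes cf: "continuous_on Y f" and fY: "f ` Y \<subseteq> Y" and c: "c \<in> {0,3}"
  obtains c' F where "c' \<in> {0,3}" "continuous_on {s0-\<delta>..s0+\<delta>} F"
    "\<And>t. t \<in> {s0-\<delta>..s0+\<delta>} \<Longrightarrow> f (E c t) = E c' (F t)"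
proof (cases "s0 - \<delta> \<le> s0 + \<delta>")
  case False
  then have "{s0-\<delta>..s0+\<delta>} = {}" by simp
  then show ?thesis using that[of 0 id] by auto
next
  case True
  define I where "I = {s0-\<delta>..s0+\<delta>}"
  have s0I: "s0 \<in> I" using True unfolding I_def by auto
  define \<phi> where "\<phi> t = f (E c t)" for t
  have EY: "E c ` I \<subseteq> Y" using E_in[OF c] by auto
  have c\<phi>: "continuous_on I \<phi>"
    unfolding \<phi>_def using continuous_on_compose[OF continuous_on_E continuous_on_subset[OF cf EY]]
    by (simp add: comp_def)
  have \<phi>Y: "\<phi> ` I \<subseteq> Y" using EY fY unfolding \<phi>_def by auto
  obtain c' where c': "c' \<in> {0,3}" "cmod (\<phi> s0 - c') = 1" using cen_exists \<phi>Y s0I by blast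
  have conn: "connected (\<phi> ` I)" using c\<phi> unfolding I_def by (intro connected_continuous_image) auto
  have on: "cmod (\<phi> t - c') = 1" if "t \<in> I" for t
    using conn_center[OF conn \<phi>Y _ c'(1) c'(2)] s0I that by blast
  define g where "g t = \<phi> t - c'" for t
  have cg: "continuous_on I g" unfolding g_def using c\<phi> by (intro continuous_intros)
  have gnz: "g t \<noteq> 0" if "t \<in> I" for t using on[OF that] unfolding g_def by auto
  have contr: "contractible I" unfolding I_def by (intro convex_imp_contractible) simp
  obtain h where ch: "continuous_on I h" and gh: "\<And>t. t \<in> I \<Longrightarrow> g t = exp (h t)"
    using continuous_logarithm_on_contractible[OF cg contr gnz] by blast
  define F where "F t = Im (h t)" for t
  have cF: "continuous_on I F" unfolding F_def using ch by (intro continuous_intros)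
  have eq: "f (E c t) = E c' (F t)" if "t \<in> I" for t
  proof -
    have "cmod (exp (h t)) = 1" using on[OF that] gh[OF that] unfolding g_def by simp
    then have "Re (h t) = 0" by (rule norm_exp_imaginary)
    then have "h t = \<i> * of_real (F t)" unfolding F_def by (simp add: complex_eq_iff)
    then have "g t = exp (\<i> * of_real (F t))" using gh[OF that] by simp
    then show ?thesis unfolding g_def \<phi>_def E_def by (simp add: algebra_simps)
  qed
  show ?thesis using that[OF c'(1) cF[unfolded I_def] eq[unfolded I_def]] .
qed

lemma ball_param:
  assumes c: "c \<in> {0,3}" and \<epsilon>: "\<epsilon> > 0"
  shows "\<exists>r>0. \<forall>z\<in>Y. dist z (E c t0) < r \<longrightarrow> (\<exists>t. z = E c t \<and> \<bar>t - t0\<bar> < \<epsilon>)"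
proof -
  obtain r0 where r0: "r0 > 0"
    "\<And>w. cmod w = 1 \<Longrightarrow> cmod (w - 1) < r0 \<Longrightarrow> \<exists>\<theta>. w = exp (\<i> * of_real \<theta>) \<and> \<bar>\<theta>\<bar> < \<epsilon>"
    using local_arg[OF \<epsilon>] by blast
  define r where "r = min r0 1"
  have "\<exists>t. z = E c t \<and> \<bar>t - t0\<bar> < \<epsilon>" if z: "z \<in> Y" "dist z (E c t0) < r" for z
  proof -
    obtain cz where cz: "cz \<in> {0,3}" "cmod (z - cz) = 1" using cen_exists z(1) by blast
    have "dist z (E c t0) < 1" using z(2) unfolding r_def by simp
    then have "cz = c" using same_center[OF cz(1) c cz(2) E_center] by simp
    define w where "w = (z - c) * exp (- (\<i> * of_real t0))"
    have w1: "cmod w = 1" using cz \<open>cz = c\<close> unfolding w_def by (simp add: norm_mult)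
    have "w - 1 = (z - E c t0) * exp (- (\<i> * of_real t0))"
      unfolding w_def E_def by (simp add: algebra_simps flip: exp_add)
    then have "cmod (w - 1) = dist z (E c t0)" by (simp add: norm_mult dist_norm)
    then have "cmod (w - 1) < r0" using z(2) unfolding r_def by simp
    then obtain \<theta> where \<theta>: "w = exp (\<i> * of_real \<theta>)" "\<bar>\<theta>\<bar> < \<epsilon>" using r0(2) w1 by blast
    have "z - c = w * exp (\<i> * of_real t0)" unfolding w_def by (simp flip: exp_add)
    also have "\<dots> = exp (\<i> * of_real (t0 + \<theta>))" using \<theta>(1) by (simp add: algebra_simps flip: exp_add)
    finally have "z = E c (t0 + \<theta>)" unfolding E_def by (simp add: algebra_simps)
    then show ?thesis using \<theta>(2) by (intro exI[of _ "t0 + \<theta>"]) simp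
  qed
  moreover have "r > 0" using r0 by (simp add: r_def)
  ultimately show ?thesis by blast
qed




lemma compact_Y: "compact Y"
  unfolding Y_def by (intro compact_Un compact_sphere)

lemma E_eq_inj:
  assumes "E c t = E c t'" "\<bar>t - t'\<bar> < 2 * pi" shows "t = t'"
  using assms exp_i_inj unfolding E_def by simp

lemma local_inj:
  assumes min: "minimal_map Y f" and c: "c \<in> {0,3}" and \<delta>: "0 < \<delta>" "\<delta> \<le> 1"
    and cF: "continuous_on {s0-\<delta>..s0+\<delta>} F" and c': "c' \<in> {0,3}"
    and eq: "\<And>t. t \<in> {s0-\<delta>..s0+\<delta>} \<Longrightarrow> f (E c t) = E c' (F t)"
  shows "inj_on F {s0-\<delta>..s0+\<delta>}"
proof (rule ccontr)
  define I where "I = {s0-\<delta>..s0+\<delta>}"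
  assume "\<not> inj_on F {s0-\<delta>..s0+\<delta>}"
  then obtain x0 y0 where xy0: "x0 \<in> I" "y0 \<in> I" "x0 \<noteq> y0" "F x0 = F y0"
    unfolding inj_on_def I_def by blast
  define x where "x = min x0 y0"
  define y where "y = max x0 y0"
  have xy: "x \<in> I" "y \<in> I" "x < y" "F x = F y" using xy0 unfolding x_def y_def
    by (auto simp: min_def max_def)
  have cxy: "continuous_on {x..y} F"
    by (rule continuous_on_subset[OF cF]) (use xy in \<open>auto simp: I_def\<close>)
  obtain t0 \<epsilon> V2 where fr: "\<epsilon> > 0" "{t0-\<epsilon>..t0+\<epsilon>} \<subseteq> {x<..<y}" "V2 \<subseteq> {x<..<y}"
    "\<And>t. \<bar>t - t0\<bar> < \<epsilon> \<Longrightarrow> t \<notin> V2" "\<And>t. \<bar>t - t0\<bar> < \<epsilon> \<Longrightarrow> \<exists>t'\<in>V2. F t' = F t"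
    using fold_real[OF cxy xy(3,4)] by blast
  obtain r where r: "r > 0" "\<And>z. z \<in> Y \<Longrightarrow> dist z (E c t0) < r \<Longrightarrow> \<exists>t. z = E c t \<and> \<bar>t - t0\<bar> < \<epsilon>"
    using ball_param[OF c fr(1), of t0] by blast
  have xyI: "{x<..<y} \<subseteq> I" using xy unfolding I_def by auto
  have inI: "t \<in> I" if "\<bar>t - t0\<bar> < \<epsilon>" for t
  proof -
    have "t \<in> {t0-\<epsilon>..t0+\<epsilon>}" using that by (simp add: abs_less_iff)
    then show ?thesis using fr(2) xyI by blast
  qed
  have len: "\<bar>t - t'\<bar> < 2 * pi" if "t \<in> I" "t' \<in> I" for t t'
  proof -
    have "\<bar>t - t'\<bar> \<le> 2 * \<delta>" using that unfolding I_def by (auto simp: abs_le_iff)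
    also have "\<dots> < 2 * pi" using \<delta> pi_gt3 by linarith
    finally show ?thesis .
  qed
  show False
  proof (rule minimal_no_fold[OF min compact_Y])
    show "open (ball (E c t0) r)" by simp
    have "E c t0 \<in> ball (E c t0) r \<inter> Y" using r(1) E_in[OF c, of t0] by simp
    then show "ball (E c t0) r \<inter> Y \<noteq> {}" by blast
    show "E c ` V2 \<subseteq> Y" using E_in[OF c] by auto
    show "ball (E c t0) r \<inter> E c ` V2 = {}"
    proof (rule ccontr)
      assume "ball (E c t0) r \<inter> E c ` V2 \<noteq> {}"
      then obtain t' where t': "t' \<in> V2" "dist (E c t0) (E c t') < r" by auto
      then obtain t where t: "E c t' = E c t" "\<bar>t - t0\<bar> < \<epsilon>"
        using r(2)[of "E c t'"] E_in[OF c] by (auto simp: dist_commute)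
      have "t' \<in> I" using t'(1) fr(3) xyI by blast
      then have "t' = t" using E_eq_inj[OF t(1)] len inI[OF t(2)] by blast
      then show False using fr(4)[OF t(2)] t'(1) by simp
    qed
    show "f ` (ball (E c t0) r \<inter> Y) \<subseteq> f ` E c ` V2"
    proof
      fix v assume "v \<in> f ` (ball (E c t0) r \<inter> Y)"
      then obtain z where z: "z \<in> Y" "dist (E c t0) z < r" "v = f z" by auto
      then obtain t where t: "z = E c t" "\<bar>t - t0\<bar> < \<epsilon>" using r(2)[of z] by (auto simp: dist_commute)
      obtain t' where t': "t' \<in> V2" "F t' = F t" using fr(5)[OF t(2)] by blast
      have "t' \<in> I" using t'(1) fr(3) xyI by blast
      have "v = E c' (F t)" using z(3) t(1) eq inI[OF t(2)] unfolding I_def by simp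
      also have "\<dots> = f (E c t')" using eq \<open>t' \<in> I\<close> t'(2) unfolding I_def by simp
      finally show "v \<in> f ` E c ` V2" using t'(1) by blast
    qed
  qed
qed




lemma E_shift: "E c (y - 2 * of_int n * pi) = E c y"
proof -
  have "exp (\<i> * of_real (y - 2 * of_int n * pi)) = exp (\<i> * of_real y)"
    unfolding exp_eq by (intro exI[of _ "-n"]) (simp add: algebra_simps)
  then show ?thesis unfolding E_def by simp
qed

lemma minimal_inj:
  assumes min: "minimal_map Y f"
  shows "inj_on f Y"
proof (rule inj_onI, rule ccontr)
  fix a b assume a: "a \<in> Y" and b: "b \<in> Y" and fab: "f a = f b" and ab: "a \<noteq> b"
  have fY: "f ` Y \<subseteq> Y" and cf: "continuous_on Y f" using min unfolding minimal_map_def by auto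
  obtain ca where ca: "ca \<in> {0,3}" "cmod (a - ca) = 1" using cen_exists a by blast
  obtain sa where sa: "a = E ca sa" using polar ca(2) by blast
  obtain cb where cb: "cb \<in> {0,3}" "cmod (b - cb) = 1" using cen_exists b by blast
  obtain sb where sb: "b = E cb sb" using polar cb(2) by blast
  define \<delta> where "\<delta> = min 1 (dist a b / 3)"
  have dab: "dist a b > 0" using ab by simp
  have \<delta>: "0 < \<delta>" "\<delta> \<le> 1" "3 * \<delta> \<le> dist a b" using dab unfolding \<delta>_def by auto
  define Ia where "Ia = {sa-\<delta>..sa+\<delta>}"
  define Ib where "Ib = {sb-\<delta>..sb+\<delta>}"
  obtain ca' Fa where ca': "ca' \<in> {0,3}" and cFa: "continuous_on Ia Fa"
    and eqa: "\<And>t. t \<in> Ia \<Longrightarrow> f (E ca t) = E ca' (Fa t)"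
    using lift_exists[OF cf fY ca(1), of sa \<delta>] unfolding Ia_def by blast
  obtain cb' Fb where cb': "cb' \<in> {0,3}" and cFb: "continuous_on Ib Fb"
    and eqb: "\<And>t. t \<in> Ib \<Longrightarrow> f (E cb t) = E cb' (Fb t)"
    using lift_exists[OF cf fY cb(1), of sb \<delta>] unfolding Ib_def by blast
  have saI: "sa \<in> Ia" and sbI: "sb \<in> Ib" using \<delta> unfolding Ia_def Ib_def by auto
  have fa: "f a = E ca' (Fa sa)" using eqa[OF saI] sa by simp
  have fb: "f b = E cb' (Fb sb)" using eqb[OF sbI] sb by simp
  have "ca' = cb'" using same_center[OF ca' cb' E_center E_center, of "Fa sa" "Fb sb"] fa fb fab by simp
  have injA: "inj_on Fa Ia" unfolding Ia_def
    by (rule local_inj[OF min ca(1) \<delta>(1,2) _ ca']) (use cFa eqa in \<open>auto simp: Ia_def\<close>)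
  have injB: "inj_on Fb Ib" unfolding Ib_def
    by (rule local_inj[OF min cb(1) \<delta>(1,2) _ cb']) (use cFb eqb in \<open>auto simp: Ib_def\<close>)
  have "exp (\<i> * of_real (Fb sb)) = exp (\<i> * of_real (Fa sa))"
    using fa fb fab \<open>ca' = cb'\<close> unfolding E_def by simp
  then obtain n :: int where n: "\<i> * of_real (Fb sb) = \<i> * of_real (Fa sa) + (of_int (2 * n) * pi) * \<i>"
    unfolding exp_eq by blast
  from arg_cong[OF n, of Im] have nn: "Fb sb = Fa sa + 2 * of_int n * pi" by simp
  define G where "G t = Fb t - 2 * of_int n * pi" for t
  have cG: "continuous_on Ib G" unfolding G_def using cFb by (intro continuous_intros)
  have injG: "inj_on G Ib" using injB unfolding G_def inj_on_def by auto
  have eqG: "f (E cb t) = E ca' (G t)" if "t \<in> Ib" for t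
    using eqb[OF that] \<open>ca' = cb'\<close> E_shift unfolding G_def by simp
  have Gsb: "G sb = Fa sa" using nn unfolding G_def by simp
  obtain \<eta> where \<eta>: "\<eta> > 0" "\<And>w. \<bar>w - G sb\<bar> < \<eta> \<Longrightarrow> \<exists>t\<in>{sb-\<delta>..sb+\<delta>}. G t = w"
    using inj_open_image[of "sb-\<delta>" "sb+\<delta>" G sb] cG injG \<delta>(1) unfolding Ib_def by auto
  have "sa \<in> Ia" by (rule saI)
  from cFa[unfolded continuous_on_iff, rule_format, OF this \<eta>(1)]
  obtain d where d: "d > 0" "\<And>t. t \<in> Ia \<Longrightarrow> dist t sa < d \<Longrightarrow> dist (Fa t) (Fa sa) < \<eta>" by blast
  define \<epsilon> where "\<epsilon> = min d \<delta>"
  have \<epsilon>: "\<epsilon> > 0" using d \<delta> by (simp add: \<epsilon>_def)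
  obtain r0 where r0: "r0 > 0" "\<And>z. z \<in> Y \<Longrightarrow> dist z (E ca sa) < r0 \<Longrightarrow> \<exists>t. z = E ca t \<and> \<bar>t - sa\<bar> < \<epsilon>"
    using ball_param[OF ca(1) \<epsilon>, of sa] by blast
  define r where "r = min r0 \<delta>"
  have r: "r > 0" using r0 \<delta> by (simp add: r_def)
  show False
  proof (rule minimal_no_fold[OF min compact_Y])
    show "open (ball a r)" by simp
    have "a \<in> ball a r \<inter> Y" using r a by simp
    then show "ball a r \<inter> Y \<noteq> {}" by blast
    show "E cb ` Ib \<subseteq> Y" using E_in[OF cb(1)] by auto
    show "ball a r \<inter> E cb ` Ib = {}"
    proof (rule ccontr)
      assume "ball a r \<inter> E cb ` Ib \<noteq> {}"
      then obtain t where t: "t \<in> Ib" "dist a (E cb t) < r" by auto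
      have "dist (E cb t) b \<le> \<bar>t - sb\<bar>" using E_dist sb by simp
      also have "\<dots> \<le> \<delta>" using t(1) unfolding Ib_def by (simp add: abs_le_iff)
      finally have "dist (E cb t) b \<le> \<delta>" .
      moreover have "dist a (E cb t) < \<delta>" using t(2) unfolding r_def by simp
      ultimately have "dist a b < 2 * \<delta>" using dist_triangle[of a b "E cb t"] by linarith
      then show False using \<delta> by linarith
    qed
    show "f ` (ball a r \<inter> Y) \<subseteq> f ` E cb ` Ib"
    proof
      fix v assume "v \<in> f ` (ball a r \<inter> Y)"
      then obtain z where z: "z \<in> Y" "dist a z < r" "v = f z" by auto
      then obtain t where t: "z = E ca t" "\<bar>t - sa\<bar> < \<epsilon>" using r0(2)[of z] sa unfolding r_def
        by (auto simp: dist_commute)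
      have tI: "t \<in> Ia" using t(2) unfolding Ia_def \<epsilon>_def by (auto simp: abs_less_iff)
      have "dist (Fa t) (Fa sa) < \<eta>" using d(2)[OF tI] t(2) unfolding \<epsilon>_def by (simp add: dist_real_def)
      then have "\<bar>Fa t - G sb\<bar> < \<eta>" using Gsb by (simp add: dist_real_def)
      then obtain t' where t': "t' \<in> Ib" "G t' = Fa t" using \<eta>(2) unfolding Ib_def by blast
      have "v = E ca' (Fa t)" using z(3) t(1) eqa[OF tI] by simp
      also have "\<dots> = f (E cb t')" using eqG[OF t'(1)] t'(2) by simp
      finally show "v \<in> f ` E cb ` Ib" using t'(1) by blast
    qed
  qed
qed

lemma minimal_bij:
  assumes min: "minimal_map Y f" shows "bij_betw f Y Y"
  using minimal_inj[OF min] minimal_surj[OF min compact_Y] unfolding bij_betw_def by simp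




definition om :: "real \<Rightarrow> complex" where "om \<theta> = exp (\<i> * of_real (pi * \<theta>))"
definition TT :: "real \<Rightarrow> complex \<Rightarrow> complex" where
  "TT \<theta> z = (if cmod z = 1 then z * om \<theta> + 3 else (z - 3) * om \<theta>)"
definition SS :: "real \<Rightarrow> complex \<Rightarrow> complex" where
  "SS \<theta> z = (if cmod z = 1 then z / om \<theta> + 3 else (z - 3) / om \<theta>)"

lemma om_norm [simp]: "cmod (om \<theta>) = 1" by (simp add: om_def)
lemma om_nz [simp]: "om \<theta> \<noteq> 0" by (simp add: om_def)

lemma C1_not_unit: assumes "cmod (z - 3) = 1" shows "cmod z \<noteq> 1"
proof
  assume "cmod z = 1"
  then have "dist z z \<ge> 1" using far[of z z] assms by simp
  then show False by simp
qed

lemma TT_step: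
  assumes d: "d \<in> {0,3}" and u: "cmod u = 1"
  shows "TT \<theta> (d + u) = (3 - d) + u * om \<theta>"
proof (cases "d = 0")
  case True then show ?thesis using u by (simp add: TT_def)
next
  case False
  then have d3: "d = 3" using d by auto
  have "cmod (3 + u - 3) = 1" using u by simp
  then have "cmod (3 + u) \<noteq> 1" by (rule C1_not_unit)
  then show ?thesis using d3 by (simp add: TT_def)
qed

lemma SS_step:
  assumes d: "d \<in> {0,3}" and u: "cmod u = 1"
  shows "SS \<theta> (d + u) = (3 - d) + u / om \<theta>"
proof (cases "d = 0")
  case True then show ?thesis using u by (simp add: SS_def)
next
  case False
  then have d3: "d = 3" using d by auto
  have "cmod (3 + u - 3) = 1" using u by simp
  then have "cmod (3 + u) \<noteq> 1" by (rule C1_not_unit)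
  then show ?thesis using d3 by (simp add: SS_def)
qed

lemma Y_decomp: assumes "z \<in> Y" obtains d u where "d \<in> {0,3}" "cmod u = 1" "z = d + u"
  using cen_exists[OF assms] by (metis add.commute diff_add_cancel)

lemma in_Y: "d \<in> {0,3} \<Longrightarrow> cmod u = 1 \<Longrightarrow> d + u \<in> Y"
  by (auto simp: Y_cases)

lemma TT_Y: "z \<in> Y \<Longrightarrow> TT \<theta> z \<in> Y"
proof -
  assume "z \<in> Y"
  then obtain d u where du: "d \<in> {0,3}" "cmod u = 1" "z = d + u" by (rule Y_decomp)
  have "3 - d \<in> {0,3}" using du by auto
  then show ?thesis using TT_step[OF du(1,2)] du by (simp add: in_Y norm_mult)
qed

lemma SS_Y: "z \<in> Y \<Longrightarrow> SS \<theta> z \<in> Y"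
proof -
  assume "z \<in> Y"
  then obtain d u where du: "d \<in> {0,3}" "cmod u = 1" "z = d + u" by (rule Y_decomp)
  have "3 - d \<in> {0,3}" using du by auto
  then show ?thesis using SS_step[OF du(1,2)] du by (simp add: in_Y norm_divide)
qed

lemma SS_TT: "z \<in> Y \<Longrightarrow> SS \<theta> (TT \<theta> z) = z"
proof -
  assume "z \<in> Y"
  then obtain d u where du: "d \<in> {0,3}" "cmod u = 1" "z = d + u" by (rule Y_decomp)
  have d': "3 - d \<in> {0,3}" using du by auto
  have "cmod (u * om \<theta>) = 1" using du by (simp add: norm_mult)
  then show ?thesis using TT_step[OF du(1,2)] SS_step[OF d'] du by simp
qed

lemma TT_SS: "z \<in> Y \<Longrightarrow> TT \<theta> (SS \<theta> z) = z"
proof -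
  assume "z \<in> Y"
  then obtain d u where du: "d \<in> {0,3}" "cmod u = 1" "z = d + u" by (rule Y_decomp)
  have d': "3 - d \<in> {0,3}" using du by auto
  have "cmod (u / om \<theta>) = 1" using du by (simp add: norm_divide)
  then show ?thesis using SS_step[OF du(1,2)] TT_step[OF d'] du by simp
qed

lemma cases_cont:
  fixes g h :: "complex \<Rightarrow> complex"
  assumes "continuous_on UNIV g" "continuous_on UNIV h"
  shows "continuous_on Y (\<lambda>z. if cmod z = 1 then g z else h z)"
  unfolding Y_def
proof (rule continuous_on_cases)
  show "closed (sphere (0::complex) 1)" "closed (sphere (3::complex) 1)" by auto
  show "continuous_on (sphere 0 1) g" "continuous_on (sphere 3 1) h"
    using assms by (auto intro: continuous_on_subset)
  show "\<forall>x. x \<in> sphere 0 1 \<and> \<not> cmod x = 1 \<or> x \<in> sphere 3 1 \<and> cmod x = 1 \<longrightarrow> g x = h x"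
    using C1_not_unit by (auto simp: dist_norm norm_minus_commute)
qed

lemma TT_homeo: "homeomorphism Y Y (TT \<theta>) (SS \<theta>)"
proof (rule homeomorphismI)
  show "continuous_on Y (TT \<theta>)" unfolding TT_def by (intro cases_cont continuous_intros)
  show "continuous_on Y (SS \<theta>)" unfolding SS_def by (intro cases_cont continuous_intros) auto
  show "TT \<theta> ` Y \<subseteq> Y" using TT_Y by auto
  show "SS \<theta> ` Y \<subseteq> Y" using SS_Y by auto
  show "\<And>x. x \<in> Y \<Longrightarrow> SS \<theta> (TT \<theta> x) = x" by (rule SS_TT)
  show "\<And>y. y \<in> Y \<Longrightarrow> TT \<theta> (SS \<theta> y) = y" by (rule TT_SS)
qed

lemma TT_iter:
  assumes d: "d \<in> {0,3}" and u: "cmod u = 1"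
  shows "(TT \<theta> ^^ n) (d + u) = (if even n then d else 3 - d) + u * om \<theta> ^ n"
proof (induction n)
  case 0 then show ?case by simp
next
  case (Suc n)
  have dn: "(if even n then d else 3 - d) \<in> {0,3}" using d by auto
  have un: "cmod (u * om \<theta> ^ n) = 1" using u by (simp add: norm_mult norm_power)
  have "(TT \<theta> ^^ Suc n) (d + u) = TT \<theta> ((if even n then d else 3 - d) + u * om \<theta> ^ n)"
    using Suc by simp
  also have "\<dots> = (3 - (if even n then d else 3 - d)) + u * om \<theta> ^ n * om \<theta>"
    by (rule TT_step[OF dn un])
  also have "\<dots> = (if even (Suc n) then d else 3 - d) + u * om \<theta> ^ Suc n"
    by (simp add: algebra_simps)
  finally show ?case .
qed




lemma om_pow: "om \<theta> ^ (2 * m) = exp (\<i> * of_real (2 * pi * real m * \<theta>))"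
proof -
  have "om \<theta> ^ (2 * m) = exp (of_nat (2 * m) * (\<i> * of_real (pi * \<theta>)))"
    unfolding om_def by (rule exp_of_nat_mult[symmetric])
  also have "of_nat (2 * m) * (\<i> * of_real (pi * \<theta>)) = \<i> * of_real (2 * pi * real m * \<theta>)"
    by simp
  finally show ?thesis .
qed

lemma dens:
  assumes \<theta>: "\<theta> \<notin> \<rat>" and u: "cmod u = 1" and v: "cmod v = 1" and \<epsilon>: "\<epsilon> > 0"
  shows "\<exists>m. cmod (u * om \<theta> ^ (2 * m) - v) < \<epsilon>"
proof -
  have unz: "u \<noteq> 0" using u by auto
  have "cmod (v / u) = 1" using u v by (simp add: norm_divide)
  then obtain \<beta> where \<beta>: "v / u = exp (\<i> * of_real \<beta>)" using unit_exp by blast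
  define \<alpha> where "\<alpha> = \<beta> / (2 * pi)"
  have e': "\<epsilon> / (2 * pi) > 0" using \<epsilon> by simp
  obtain h k :: int where hk: "k > 0" "\<bar>of_int k * \<theta> - of_int h - \<alpha>\<bar> < \<epsilon> / (2 * pi)"
    using sequence_of_fractional_parts_is_dense[OF \<theta> e', of \<alpha>] by blast
  define m where "m = nat k"
  have mk: "real m = of_int k" using hk(1) unfolding m_def by simp
  have "u * om \<theta> ^ (2 * m) - v = u * (om \<theta> ^ (2 * m) - v / u)" using unz by (simp add: algebra_simps)
  then have "cmod (u * om \<theta> ^ (2 * m) - v) = cmod (om \<theta> ^ (2 * m) - v / u)" using u by (simp add: norm_mult)
  also have "v / u = exp (\<i> * of_real (\<beta> + 2 * of_int h * pi))"
  proof -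
    have "exp (\<i> * of_real (\<beta> + 2 * of_int h * pi)) = exp (\<i> * of_real \<beta>)"
      unfolding exp_eq by (intro exI[of _ h]) (simp add: algebra_simps)
    then show ?thesis using \<beta> by simp
  qed
  also have "cmod (om \<theta> ^ (2 * m) - exp (\<i> * of_real (\<beta> + 2 * of_int h * pi)))
      \<le> \<bar>2 * pi * real m * \<theta> - (\<beta> + 2 * of_int h * pi)\<bar>"
    unfolding om_pow by (rule exp_i_dist)
  also have "2 * pi * real m * \<theta> - (\<beta> + 2 * of_int h * pi) = 2 * pi * (of_int k * \<theta> - of_int h - \<alpha>)"
    unfolding mk \<alpha>_def by (simp add: algebra_simps)
  also have "\<bar>2 * pi * (of_int k * \<theta> - of_int h - \<alpha>)\<bar> = 2 * pi * \<bar>of_int k * \<theta> - of_int h - \<alpha>\<bar>"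
    by (simp add: abs_mult)
  also have "\<dots> < 2 * pi * (\<epsilon> / (2 * pi))" using hk(2) by (intro mult_strict_left_mono) auto
  also have "\<dots> = \<epsilon>" by simp
  finally show ?thesis by blast
qed

lemma TT_minimal:
  assumes \<theta>: "\<theta> \<notin> \<rat>"
  shows "minimal_map Y (TT \<theta>)"
  unfolding minimal_map_def
proof (intro conjI ballI)
  show "TT \<theta> ` Y \<subseteq> Y" using TT_Y by auto
  show "continuous_on Y (TT \<theta>)" using TT_homeo unfolding homeomorphism_def by blast
  fix z assume z: "z \<in> Y"
  then obtain d u where du: "d \<in> {0,3}" "cmod u = 1" "z = d + u" by (rule Y_decomp)
  show "Y \<subseteq> closure {(TT \<theta> ^^ n) z | n. True}"
  proof
    fix w assume w: "w \<in> Y"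
    then obtain e v where ev: "e \<in> {0,3}" "cmod v = 1" "w = e + v" by (rule Y_decomp)
    show "w \<in> closure {(TT \<theta> ^^ n) z | n. True}"
      unfolding closure_approachable
    proof (intro allI impI)
      fix \<epsilon> :: real assume \<epsilon>: "\<epsilon> > 0"
      show "\<exists>y\<in>{(TT \<theta> ^^ n) z | n. True}. dist y w < \<epsilon>"
      proof (cases "e = d")
        case True
        obtain m where m: "cmod (u * om \<theta> ^ (2 * m) - v) < \<epsilon>" using dens[OF \<theta> du(2) ev(2) \<epsilon>] by blast
        have "(TT \<theta> ^^ (2 * m)) z = d + u * om \<theta> ^ (2 * m)" using TT_iter[OF du(1,2)] du(3) by simp
        then have "dist ((TT \<theta> ^^ (2 * m)) z) w < \<epsilon>" using m ev(3) True by (simp add: dist_norm)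
        then show ?thesis by blast
      next
        case False
        then have e: "e = 3 - d" using du(1) ev(1) by auto
        have uo: "cmod (u * om \<theta>) = 1" using du(2) by (simp add: norm_mult)
        obtain m where m: "cmod (u * om \<theta> * om \<theta> ^ (2 * m) - v) < \<epsilon>" using dens[OF \<theta> uo ev(2) \<epsilon>] by blast
        have "(TT \<theta> ^^ Suc (2 * m)) z = (3 - d) + u * om \<theta> ^ Suc (2 * m)" using TT_iter[OF du(1,2), of "Suc (2 * m)" \<theta>] du(3) by (simp del: funpow.simps power.simps)
        also have "u * om \<theta> ^ Suc (2 * m) = u * om \<theta> * om \<theta> ^ (2 * m)" by simp
        finally have "dist ((TT \<theta> ^^ Suc (2 * m)) z) w < \<epsilon>" using m ev(3) e by (simp add: dist_norm)
        then show ?thesis by blast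
      qed
    qed
  qed
qed




lemma infinite_Y: "infinite Y"
proof
  assume fin: "finite Y"
  have "E 0 ` {0..1} \<subseteq> Y" using E_in by auto
  then have "finite (E 0 ` {0..1})" using fin finite_subset by blast
  moreover have "inj_on (E 0) {0..1::real}"
  proof (rule inj_onI)
    fix s t :: real assume "s \<in> {0..1}" "t \<in> {0..1}" "E 0 s = E 0 t"
    moreover have "\<bar>s - t\<bar> < 2 * pi" using \<open>s \<in> {0..1}\<close> \<open>t \<in> {0..1}\<close> pi_gt3 by (auto simp: abs_less_iff)
    ultimately show "s = t" using E_eq_inj by blast
  qed
  ultimately have "finite {0..1::real}" using finite_imageD by blast
  then show False using infinite_Icc[of "0::real" 1] by simp
qed

lemma not_connected_Y: "\<not> connected Y"
proof
  assume "connected Y"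
  have "1 \<in> Y" "4 \<in> Y" by (auto simp: Y_cases)
  moreover have "cmod (1 - 0 :: complex) = 1" by simp
  ultimately have "cmod (4 - 0 :: complex) = 1"
    using conn_center[OF \<open>connected Y\<close> order_refl, of 1 0 4] by simp
  then show False by simp
qed

lemma not_homeo_circle: "\<not> (Y homeomorphic sphere (0::complex) 1)"
proof
  assume "Y homeomorphic sphere (0::complex) 1"
  moreover have "connected (sphere (0::complex) 1)" by (rule connected_sphere) simp
  ultimately show False using not_connected_Y homeomorphic_connectedness by blast
qed

definition sw :: "complex \<Rightarrow> complex" where
  "sw z = (if cmod z = 1 then z + 3 else z - 3)"

lemma sw_step: assumes d: "d \<in> {0,3}" and u: "cmod u = 1" shows "sw (d + u) = (3 - d) + u"
proof (cases "d = 0")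
  case True then show ?thesis using u by (simp add: sw_def)
next
  case False
  then have d3: "d = 3" using d by auto
  have "cmod (3 + u - 3) = 1" using u by simp
  then have "cmod (3 + u) \<noteq> 1" by (rule C1_not_unit)
  then show ?thesis using d3 by (simp add: sw_def)
qed

lemma sw_Y: "z \<in> Y \<Longrightarrow> sw z \<in> Y \<and> sw (sw z) = z"
proof -
  assume "z \<in> Y"
  then obtain d u where du: "d \<in> {0,3}" "cmod u = 1" "z = d + u" by (rule Y_decomp)
  have d': "3 - d \<in> {0,3}" using du by auto
  show ?thesis using sw_step[OF du(1,2)] sw_step[OF d' du(2)] du in_Y[OF d' du(2)] by simp
qed

lemma sw_homeo: "homeomorphism Y Y sw sw"
proof (rule homeomorphismI)
  show "continuous_on Y sw" unfolding sw_def by (intro cases_cont continuous_intros)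
  then show "continuous_on Y sw" .
  show "sw ` Y \<subseteq> Y" using sw_Y by auto
  then show "sw ` Y \<subseteq> Y" .
  show "\<And>x. x \<in> Y \<Longrightarrow> sw (sw x) = x" using sw_Y by blast
  then show "\<And>x. x \<in> Y \<Longrightarrow> sw (sw x) = x" .
qed

definition jj :: "complex \<Rightarrow> nat \<Rightarrow> real" where
  "jj z = (\<lambda>n. if n = 0 then Re z else if n = 1 then Im z else 0)"
definition kk :: "(nat \<Rightarrow> real) \<Rightarrow> complex" where
  "kk x = Complex (x 0) (x 1)"

lemma kk_jj [simp]: "kk (jj z) = z" by (simp add: kk_def jj_def)

lemma cont_jj: "continuous_on S jj"
  unfolding jj_def
proof (intro continuous_on_coordinatewise_then_product)
  fix i :: nat
  show "continuous_on S (\<lambda>z. if i = 0 then Re z else if i = 1 then Im z else 0)"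
    by (cases "i = 0"; cases "i = 1") (auto intro!: continuous_intros)
qed

lemma cont_kk: "continuous_on S kk"
proof -
  have eq: "kk = (\<lambda>x. complex_of_real (x 0) + \<i> * complex_of_real (x 1))"
    by (auto simp: kk_def fun_eq_iff complex_eq_iff)
  have c: "continuous_on S (\<lambda>x::nat\<Rightarrow>real. complex_of_real (x 0) + \<i> * complex_of_real (x 1))"
    by (intro continuous_intros continuous_on_subset[OF continuous_on_product_coordinates]) auto
  show ?thesis by (subst eq) (rule c)
qed

lemma jj_homeo: "homeomorphism Y (jj ` Y) jj kk"
  by (rule homeomorphismI) (auto intro: cont_jj cont_kk)

theorem main:
  shows "\<exists>X :: (nat \<Rightarrow> real) set. compact X \<and> infinite X \<and>
    (\<exists>T S. homeomorphism X X T S \<and> minimal_map X T) \<and>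
    \<not> (\<exists>T. minimal_map X T \<and> \<not> bij_betw T X X) \<and>
    \<not> (X homeomorphic sphere (0::complex) 1) \<and>
    \<not> slovak_space X"
proof -
  define X where "X = jj ` Y"
  have hom: "homeomorphism Y X jj kk" using jj_homeo unfolding X_def .
  have hom': "homeomorphism X Y kk jj" using homeomorphism_symD[OF hom] .
  have cX: "compact X" unfolding X_def by (rule compact_continuous_image[OF cont_jj compact_Y])
  have injj: "inj_on jj Y" using kk_jj by (metis inj_on_inverseI)
  have iX: "infinite X" unfolding X_def using infinite_Y finite_imageD[OF _ injj] by blast
  obtain \<theta> :: real where \<theta>: "\<theta> \<notin> \<rat>"
    using uncountable_UNIV_real countable_rat by (metis UNIV_eq_I countable_subset subset_UNIV)
  have h1: "homeomorphism X X (jj \<circ> (TT \<theta> \<circ> kk)) ((jj \<circ> SS \<theta>) \<circ> kk)"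
    by (rule homeomorphism_compose[OF homeomorphism_compose[OF hom' TT_homeo] hom])
  have m1: "minimal_map X (jj \<circ> TT \<theta> \<circ> kk)"
    by (rule minimal_transfer[OF hom compact_Y TT_minimal[OF \<theta>]])
  have A: "\<exists>T S. homeomorphism X X T S \<and> minimal_map X T"
    using h1 m1 by (metis comp_assoc)
  have B: "\<not> (\<exists>T. minimal_map X T \<and> \<not> bij_betw T X X)"
  proof
    assume "\<exists>T. minimal_map X T \<and> \<not> bij_betw T X X"
    then obtain T where mT: "minimal_map X T" and nb: "\<not> bij_betw T X X" by blast
    have mY: "minimal_map Y (kk \<circ> T \<circ> jj)" by (rule minimal_transfer[OF hom' cX mT])
    have bY: "bij_betw (kk \<circ> T \<circ> jj) Y Y" by (rule minimal_bij[OF mY])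
    have ij: "inj_on jj Y" by (rule inj_on_inverseI[where g=kk]) simp
    have ik: "inj_on kk X" by (rule inj_on_inverseI[where g=jj]) (use hom in \<open>auto simp: homeomorphism_def\<close>)
    have bk: "bij_betw kk X Y" using ik hom' unfolding bij_betw_def homeomorphism_def by blast
    have bj: "bij_betw jj Y X" using ij hom unfolding bij_betw_def homeomorphism_def by blast
    have "bij_betw (jj \<circ> (kk \<circ> T \<circ> jj) \<circ> kk) X X"
      by (rule bij_betw_trans[OF bk bij_betw_trans[OF bY bj]])
    moreover have "\<And>x. x \<in> X \<Longrightarrow> (jj \<circ> (kk \<circ> T \<circ> jj) \<circ> kk) x = T x"
    proof -
      fix x assume x: "x \<in> X"
      have "T x \<in> X" using mT x unfolding minimal_map_def by blast
      then show "(jj \<circ> (kk \<circ> T \<circ> jj) \<circ> kk) x = T x" using hom x unfolding homeomorphism_def by simp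
    qed
    ultimately have "bij_betw T X X" using bij_betw_cong by blast
    then show False using nb by simp
  qed
  have C: "\<not> (X homeomorphic sphere (0::complex) 1)"
  proof
    assume "X homeomorphic sphere (0::complex) 1"
    moreover have "Y homeomorphic X" using hom unfolding homeomorphic_def by blast
    ultimately have "Y homeomorphic sphere (0::complex) 1" using homeomorphic_trans by blast
    then show False using not_homeo_circle by simp
  qed
  have h2: "homeomorphism X X (jj \<circ> (sw \<circ> kk)) ((jj \<circ> sw) \<circ> kk)"
    by (rule homeomorphism_compose[OF homeomorphism_compose[OF hom' sw_homeo] hom])
  have h2': "homeomorphism X X (jj \<circ> sw \<circ> kk) (jj \<circ> sw \<circ> kk)"
    using h2 by (simp add: comp_assoc)
  have "jj 1 \<in> X" unfolding X_def by (auto simp: Y_cases)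
  moreover have "(jj \<circ> sw \<circ> kk) (jj 1) \<noteq> jj 1"
  proof
    assume "(jj \<circ> sw \<circ> kk) (jj 1) = jj 1"
    then have "kk (jj (sw 1)) = kk (jj 1)" by simp
    then show False by (simp add: sw_def)
  qed
  ultimately have D: "\<not> slovak_space X" by (rule not_slovak[OF iX h2'])
  show ?thesis using cX iX A B C D by blast
qed


theorem theorem3p3:
  shows "\<exists>X :: (nat \<Rightarrow> real) set. compact X \<and> infinite X \<and>
    (\<exists>T S. homeomorphism X X T S \<and> minimal_map X T) \<and>
    \<not> (\<exists>T. minimal_map X T \<and> \<not> bij_betw T X X) \<and>
    \<not> (X homeomorphic sphere (0::complex) 1) \<and>
    \<not> slovak_space X"
  by (rule main)

end
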